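(* Let $\alpha>1$, $\mathcal{D}_\alpha\in\{\mathcal{F}_\alpha,\mathcal{P}_\alpha\}$, $\lambda\in[0,\infty)^d$ with $\lambda_1\le\lambda_2\le\cdots\le\lambda_d$, and $i\in[d]$. Then $$\frac{J_i(\lambda;\mathcal{D}_\alpha)}{\phi_i(\lambda;\mathcal{D}_\alpha)}\le\max_{\substack{w\in\{0\}\cup[(m\wedge i)-1]\\ \theta\in[(m\wedge i)-w]}}\left\{\frac{J_{i,\theta}(\lambda^*;\mathcal{D}_\alpha,\mathcal{B}_{i,w})}{\phi_{i,\theta}(\lambda^*;\mathcal{D}_\alpha,\mathcal{B}_{i,w})}\right\},$$ where $\mathcal{B}_{i,0}=[i]$, $\mathcal{B}_{i,w}=[i]\setminus[w]$ for $w\ge1$, and $\lambda^*_k=\lambda_i$ for $k\le i$, $\lambda^*_k=\lambda_k$ for $k>i$.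
   Context: $[n]=\{1,\dots,n\}$, $[0]=\emptyset$, $a\wedge b=\min(a,b)$. Integers $1\le m\le d$. Fréchet $\mathcal{F}_\alpha$: CDF $F(x)=e^{-1/x^\alpha}$, density $f(x)=\alpha x^{-(\alpha+1)}e^{-1/x^\alpha}$, $x\ge0$, left endpoint $\nu=0$; Pareto $\mathcal{P}_\alpha$: $F(x)=1-x^{-\alpha}$, $f(x)=\alpha x^{-(\alpha+1)}$, $x\ge1$, $\nu=1$. For $\mathcal{B}\subseteq[d]$, $i\in\mathcal{B}$, $u\in\mathbb{R}^d$, $\mathrm{rank}(i,u;\mathcal{B})$ is the rank of $u_i$ among $\{u_j:j\in\mathcal{B}\}$ in descending order. For $\mathcal{D}\in\{\mathcal{F}_\alpha,\mathcal{P}_\alpha\}$ with CDF $F$, density $f$, left endpoint $\nu$, $\lambda\in[0,\infty)^d$, integer $\theta\ge1$: $$\phi_{i,\theta}(\lambda;\mathcal{D},\mathcal{B})=\int_{\nu-\lambda_i}^\infty\sum_{S\subseteq\mathcal{B}\setminus\{i\},|S|=\theta-1}\prod_{j\in S}(1-F(z+\lambda_j))\prod_{j\in\mathcal{B}\setminus(S\cup\{i\})}F(z+\lambda_j)\,f(z+\lambda_i)\,dz,$$ which equals $\mathbb{P}[\mathrm{rank}(i,r-\lambda;\mathcal{B})=\theta]$ for $r$ with i.i.d. coordinates from $\mathcal{D}$ (empty sum $=0$), and $J_{i,\theta}(\lambda;\mathcal{D},\mathcal{B})$ is the same integral with the additional factor $\frac{1}{z+\lambda_i}$ in the integrand (equivalently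 $\mathbb{E}[\mathbf 1\{\mathrm{rank}(i,r-\lambda;\mathcal{B})=\theta\}/r_i]$). Further $\phi_i(\lambda;\mathcal{D},\tilde m,\mathcal{B})=\sum_{\theta=1}^{\tilde m}\phi_{i,\theta}(\lambda;\mathcal{D},\mathcal{B})$, $J_i(\lambda;\mathcal{D},\tilde m,\mathcal{B})=\sum_{\theta=1}^{\tilde m}J_{i,\theta}(\lambda;\mathcal{D},\mathcal{B})$, $\phi_i(\lambda;\mathcal{D})=\phi_i(\lambda;\mathcal{D},m,[d])$ and $J_i(\lambda;\mathcal{D})=J_i(\lambda;\mathcal{D},m,[d])$. *)

theory Defs
  imports "HOL-Analysis.Analysis"
begin

datatype distr = Frechet real | Pareto real

fun cdf :: "distr \<Rightarrow> real \<Rightarrow> real" where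
  "cdf (Frechet a) x = (if x \<le> 0 then 0 else exp (- (x powr (- a))))"
| "cdf (Pareto a) x = (if x < 1 then 0 else 1 - x powr (- a))"

fun dens :: "distr \<Rightarrow> real \<Rightarrow> real" where
  "dens (Frechet a) x = (if x \<le> 0 then 0 else a * x powr (- (a + 1)) * exp (- (x powr (- a))))"
| "dens (Pareto a) x = (if x < 1 then 0 else a * x powr (- (a + 1)))"

fun lep :: "distr \<Rightarrow> real" where
  "lep (Frechet a) = 0"
| "lep (Pareto a) = 1"

definition rank_integrand ::
  "distr \<Rightarrow> (nat \<Rightarrow> real) \<Rightarrow> nat set \<Rightarrow> nat \<Rightarrow> nat \<Rightarrow> real \<Rightarrow> real" where
  "rank_integrand D lam B i \<theta> z =
     (\<Sum>S | S \<subseteq> B - {i} \<and> card S = \<theta> - 1.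
        (\<Prod>j\<in>S. 1 - cdf D (z + lam j)) *
        (\<Prod>j\<in>B - (S \<union> {i}). cdf D (z + lam j))) * dens D (z + lam i)"

definition phi_theta :: "nat \<Rightarrow> nat \<Rightarrow> (nat \<Rightarrow> real) \<Rightarrow> distr \<Rightarrow> nat set \<Rightarrow> real" where
  "phi_theta i \<theta> lam D B =
     (LBINT z:{lep D - lam i..}. rank_integrand D lam B i \<theta> z)"

definition J_theta :: "nat \<Rightarrow> nat \<Rightarrow> (nat \<Rightarrow> real) \<Rightarrow> distr \<Rightarrow> nat set \<Rightarrow> real" where
  "J_theta i \<theta> lam D B =
     (LBINT z:{lep D - lam i..}. rank_integrand D lam B i \<theta> z / (z + lam i))"

definition phi_sum :: "nat \<Rightarrow> (nat \<Rightarrow> real) \<Rightarrow> distr \<Rightarrow> nat \<Rightarrow> nat set \<Rightarrow> real" where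
  "phi_sum i lam D mt B = (\<Sum>\<theta>=1..mt. phi_theta i \<theta> lam D B)"

definition J_sum :: "nat \<Rightarrow> (nat \<Rightarrow> real) \<Rightarrow> distr \<Rightarrow> nat \<Rightarrow> nat set \<Rightarrow> real" where
  "J_sum i lam D mt B = (\<Sum>\<theta>=1..mt. J_theta i \<theta> lam D B)"

end

theory Submission
  imports Defs
begin


definition Qf :: "nat set \<Rightarrow> (nat \<Rightarrow> real) \<Rightarrow> int \<Rightarrow> real" where
  "Qf P b k = (\<Sum>S\<in>Pow P. if int (card S) \<le> k then (\<Prod>j\<in>S. b j) * (\<Prod>j\<in>P - S. 1 - b j) else 0)"

lemma sum_Pow_insert:
  assumes "finite A" "a \<notin> A"
  shows "(\<Sum>T\<in>Pow (insert a A). G T) = (\<Sum>T\<in>Pow A. G T) + (\<Sum>T\<in>Pow A. G (insert a T))"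
proof -
  have disj: "Pow A \<inter> insert a ` Pow A = {}" using assms by auto
  have inj: "inj_on (insert a) (Pow A)" using assms unfolding inj_on_def by (metis PowD subsetD insert_ident)
  have "(\<Sum>T\<in>Pow (insert a A). G T) = (\<Sum>T\<in>Pow A. G T) + (\<Sum>T\<in>insert a ` Pow A. G T)"
    unfolding Pow_insert using assms disj by (intro sum.union_disjoint) auto
  also have "(\<Sum>T\<in>insert a ` Pow A. G T) = (\<Sum>T\<in>Pow A. G (insert a T))"
    using sum.reindex[OF inj] by simp
  finally show ?thesis .
qed

lemma Qf_insert:
  assumes "finite P" "a \<notin> P"
  shows "Qf (insert a P) b k = (1 - b a) * Qf P b k + b a * Qf P b (k - 1)"
proof -
  have "Qf (insert a P) b k =
     (\<Sum>S\<in>Pow P. if int (card S) \<le> k then (\<Prod>j\<in>S. b j) * (\<Prod>j\<in>insert a P - S. 1 - b j) else 0)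
   + (\<Sum>S\<in>Pow P. if int (card (insert a S)) \<le> k then (\<Prod>j\<in>insert a S. b j) * (\<Prod>j\<in>insert a P - insert a S. 1 - b j) else 0)"
    unfolding Qf_def by (rule sum_Pow_insert[OF assms])
  also have "(\<Sum>S\<in>Pow P. if int (card S) \<le> k then (\<Prod>j\<in>S. b j) * (\<Prod>j\<in>insert a P - S. 1 - b j) else 0)
      = (1 - b a) * Qf P b k"
    unfolding Qf_def sum_distrib_left
  proof (rule sum.cong[OF refl])
    fix S assume "S \<in> Pow P"
    then have "insert a P - S = insert a (P - S)" "a \<notin> P - S" "finite (P - S)" using assms by auto
    then show "(if int (card S) \<le> k then (\<Prod>j\<in>S. b j) * (\<Prod>j\<in>insert a P - S. 1 - b j) else 0) =
       (1 - b a) * (if int (card S) \<le> k then (\<Prod>j\<in>S. b j) * (\<Prod>j\<in>P - S. 1 - b j) else 0)"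
      by simp
  qed
  also have "(\<Sum>S\<in>Pow P. if int (card (insert a S)) \<le> k then (\<Prod>j\<in>insert a S. b j) * (\<Prod>j\<in>insert a P - insert a S. 1 - b j) else 0)
      = b a * Qf P b (k - 1)"
    unfolding Qf_def sum_distrib_left
  proof (rule sum.cong[OF refl])
    fix S assume "S \<in> Pow P"
    then have "insert a P - insert a S = P - S" "a \<notin> S" "finite S" using assms finite_subset by auto
    then show "(if int (card (insert a S)) \<le> k then (\<Prod>j\<in>insert a S. b j) * (\<Prod>j\<in>insert a P - insert a S. 1 - b j) else 0) =
       b a * (if int (card S) \<le> k - 1 then (\<Prod>j\<in>S. b j) * (\<Prod>j\<in>P - S. 1 - b j) else 0)"
      by (simp add: algebra_simps)
  qed
  finally show ?thesis .
qed

lemma Qf_empty: "Qf {} b k = (if 0 \<le> k then 1 else 0)"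
  unfolding Qf_def by simp

lemma Qf_nonneg:
  assumes "\<forall>j\<in>P. 0 \<le> b j \<and> b j \<le> 1"
  shows "0 \<le> Qf P b k"
  unfolding Qf_def using assms
  by (intro sum_nonneg) (auto intro!: mult_nonneg_nonneg prod_nonneg)

lemma Qf_le:
  assumes "\<forall>j\<in>P. 0 \<le> b j \<and> b j \<le> 1"
  shows "Qf P b k \<le> 2 ^ card P"
proof (cases "finite P")
  case True
  have "Qf P b k \<le> (\<Sum>S\<in>Pow P. (1::real))"
    unfolding Qf_def
  proof (rule sum_mono)
    fix S assume "S \<in> Pow P"
    then have "(\<Prod>j\<in>S. b j) \<le> 1" "(\<Prod>j\<in>P - S. 1 - b j) \<le> 1" "0 \<le> (\<Prod>j\<in>S. b j)" "0 \<le> (\<Prod>j\<in>P - S. 1 - b j)"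
      using assms by (auto intro!: prod_le_1 prod_nonneg)
    then show "(if int (card S) \<le> k then (\<Prod>j\<in>S. b j) * (\<Prod>j\<in>P - S. 1 - b j) else 0) \<le> 1"
      by (simp add: mult_le_one)
  qed
  also have "\<dots> = 2 ^ card P" using True by (simp add: card_Pow)
  finally show ?thesis .
next
  case False
  then show ?thesis unfolding Qf_def by simp
qed

lemma Qf_mono_k:
  assumes "\<forall>j\<in>P. 0 \<le> b j \<and> b j \<le> 1" "k \<le> k'"
  shows "Qf P b k \<le> Qf P b k'"
  unfolding Qf_def using assms
  by (intro sum_mono) (auto intro!: mult_nonneg_nonneg prod_nonneg)

lemma Qf_anti:
  assumes "finite P" "\<forall>j\<in>P. 0 \<le> b j \<and> b j \<le> b' j \<and> b' j \<le> 1"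
  shows "Qf P b' k \<le> Qf P b k"
  using assms
proof (induction P arbitrary: k rule: finite_induct)
  case empty
  then show ?case by (simp add: Qf_empty)
next
  case (insert a P)
  have b: "\<forall>j\<in>P. 0 \<le> b j \<and> b j \<le> 1" and b': "\<forall>j\<in>P. 0 \<le> b' j \<and> b' j \<le> 1"
    using insert.prems by force+
  have IH1: "Qf P b' k \<le> Qf P b k" and IH2: "Qf P b' (k-1) \<le> Qf P b (k-1)"
    using insert by auto
  have ba: "0 \<le> b a" "b a \<le> b' a" "b' a \<le> 1" using insert.prems by auto
  have m: "Qf P b (k-1) \<le> Qf P b k" by (rule Qf_mono_k[OF b]) simp
  have "Qf (insert a P) b' k = (1 - b' a) * Qf P b' k + b' a * Qf P b' (k - 1)"
    by (rule Qf_insert) (use insert in auto)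
  also have "\<dots> \<le> (1 - b' a) * Qf P b k + b' a * Qf P b (k - 1)"
    using IH1 IH2 ba by (intro add_mono mult_left_mono) auto
  also have "\<dots> \<le> (1 - b a) * Qf P b k + b a * Qf P b (k - 1)"
  proof -
    have "(b' a - b a) * Qf P b (k - 1) \<le> (b' a - b a) * Qf P b k"
      using m ba by (intro mult_left_mono) auto
    then show ?thesis by (simp add: algebra_simps)
  qed
  also have "\<dots> = Qf (insert a P) b k"
    by (rule Qf_insert[symmetric]) (use insert in auto)
  finally show ?case .
qed

lemma Qf_decomp:
  assumes "finite A" "finite C" "A \<inter> C = {}"
    and "\<forall>j\<in>C. b' j = b j" and "\<forall>j\<in>A. b j = (1 - u) + u * b' j"
  shows "Qf (A \<union> C) b k = (\<Sum>T\<in>Pow A. (1 - u) ^ card T * u ^ (card A - card T) *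
            Qf ((A - T) \<union> C) b' (k - int (card T)))"
  using assms
proof (induction A arbitrary: k rule: finite_induct)
  case empty
  then have "Qf C b k = Qf C b' k" unfolding Qf_def by (intro sum.cong refl if_cong arg_cong2[where f="(*)"] prod.cong) auto
  then show ?case by simp
next
  case (insert a A)
  have aC: "a \<notin> A \<union> C" using insert by auto
  have IH: "\<And>k. Qf (A \<union> C) b k = (\<Sum>T\<in>Pow A. (1 - u) ^ card T * u ^ (card A - card T) *
            Qf ((A - T) \<union> C) b' (k - int (card T)))"
    using insert by auto
  have ba: "b a = (1 - u) + u * b' a" using insert by auto
  define S where "S = (\<lambda>k. (\<Sum>T\<in>Pow A. (1 - u) ^ card T * u ^ (card A - card T) *
            Qf ((A - T) \<union> C) b' (k - int (card T))))"
  have "Qf (insert a A \<union> C) b k = Qf (insert a (A \<union> C)) b k" by simp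
  also have "\<dots> = (1 - b a) * Qf (A \<union> C) b k + b a * Qf (A \<union> C) b (k - 1)"
    by (rule Qf_insert) (use insert aC in auto)
  also have "\<dots> = u * (1 - b' a) * S k + ((1 - u) + u * b' a) * S (k - 1)"
    unfolding S_def IH[symmetric] ba by (simp add: algebra_simps)
  finally have L: "Qf (insert a A \<union> C) b k = u * (1 - b' a) * S k + ((1 - u) + u * b' a) * S (k - 1)" .
  have R1: "(\<Sum>T\<in>Pow A. (1 - u) ^ card T * u ^ (card (insert a A) - card T) *
            Qf ((insert a A - T) \<union> C) b' (k - int (card T)))
        = u * (1 - b' a) * S k + u * b' a * S (k - 1)"
    unfolding S_def sum_distrib_left sum.distrib[symmetric]
  proof (rule sum.cong[OF refl])
    fix T assume T: "T \<in> Pow A"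
    then have cT: "card T \<le> card A" using insert by (auto intro: card_mono)
    have e1: "(insert a A - T) \<union> C = insert a ((A - T) \<union> C)" using T insert by auto
    have fin: "finite ((A - T) \<union> C)" "a \<notin> (A - T) \<union> C" using insert by auto
    have e2: "card (insert a A) - card T = Suc (card A - card T)" using insert cT by simp
    show "(1 - u) ^ card T * u ^ (card (insert a A) - card T) * Qf (insert a A - T \<union> C) b' (k - int (card T)) =
         u * (1 - b' a) * ((1 - u) ^ card T * u ^ (card A - card T) * Qf (A - T \<union> C) b' (k - int (card T))) +
         u * b' a * ((1 - u) ^ card T * u ^ (card A - card T) * Qf (A - T \<union> C) b' (k - 1 - int (card T)))"
      unfolding e1 e2 Qf_insert[OF fin] by (simp add: algebra_simps)
  qed
  have R2: "(\<Sum>T\<in>Pow A. (1 - u) ^ card (insert a T) * u ^ (card (insert a A) - card (insert a T)) *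
            Qf ((insert a A - insert a T) \<union> C) b' (k - int (card (insert a T))))
        = (1 - u) * S (k - 1)"
    unfolding S_def sum_distrib_left
  proof (rule sum.cong[OF refl])
    fix T assume T: "T \<in> Pow A"
    then have "finite T" "a \<notin> T" using insert finite_subset by auto
    then have c: "card (insert a T) = Suc (card T)" by simp
    have e1: "(insert a A - insert a T) = A - T" using T insert by auto
    show "(1 - u) ^ card (insert a T) * u ^ (card (insert a A) - card (insert a T)) *
            Qf ((insert a A - insert a T) \<union> C) b' (k - int (card (insert a T))) =
          (1 - u) * ((1 - u) ^ card T * u ^ (card A - card T) * Qf (A - T \<union> C) b' (k - 1 - int (card T)))"
      unfolding c e1 using insert by (simp add: algebra_simps)
  qed
  show ?case
    unfolding L sum_Pow_insert[OF insert(1,2)] R1 R2 by (simp add: algebra_simps)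
qed




lemma chebyshev_aux:
  fixes M :: "'a measure" and G h p :: "'a \<Rightarrow> real"
  assumes iG: "integrable M G" and iGp: "integrable M (\<lambda>x. G x * p x)"
    and iGh: "integrable M (\<lambda>x. G x * h x)" and iGhp: "integrable M (\<lambda>x. G x * h x * p x)"
    and G0: "\<And>x. 0 \<le> G x" and p0: "\<And>x. 0 \<le> G x * p x"
    and key: "\<And>c. 0 < c \<Longrightarrow> \<exists>H. \<forall>x. G x * (h x - H) * (p x - c) \<le> 0"
  shows "(\<integral>x. G x * h x * p x \<partial>M) * (\<integral>x. G x \<partial>M) \<le> (\<integral>x. G x * h x \<partial>M) * (\<integral>x. G x * p x \<partial>M)"
    and "(\<integral>x. G x \<partial>M) = 0 \<Longrightarrow> (\<integral>x. G x * h x * p x \<partial>M) = 0"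
proof -
  have IG0: "0 \<le> (\<integral>x. G x \<partial>M)" using G0 by (simp add: integral_nonneg_AE)
  have IGp0: "0 \<le> (\<integral>x. G x * p x \<partial>M)" using p0 by (simp add: integral_nonneg_AE)
  have Z1: "(\<integral>x. G x * h x * p x \<partial>M) = 0 \<and> (\<integral>x. G x * h x \<partial>M) = 0" if "(\<integral>x. G x \<partial>M) = 0"
  proof -
    have "AE x in M. G x = 0" using that iG G0 by (subst (asm) integral_nonneg_eq_0_iff_AE) auto
    then have "AE x in M. G x * h x * p x = 0" "AE x in M. G x * h x = 0" by auto
    then show ?thesis by (simp add: integral_eq_zero_AE)
  qed
  have Z2: "(\<integral>x. G x * h x * p x \<partial>M) = 0" if "(\<integral>x. G x * p x \<partial>M) = 0"
  proof -
    have "AE x in M. G x * p x = 0" using that iGp p0 by (subst (asm) integral_nonneg_eq_0_iff_AE) auto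
    then have "AE x in M. G x * h x * p x = 0" by eventually_elim auto
    then show ?thesis by (simp add: integral_eq_zero_AE)
  qed
  show "(\<integral>x. G x \<partial>M) = 0 \<Longrightarrow> (\<integral>x. G x * h x * p x \<partial>M) = 0" using Z1 by auto
  show "(\<integral>x. G x * h x * p x \<partial>M) * (\<integral>x. G x \<partial>M) \<le> (\<integral>x. G x * h x \<partial>M) * (\<integral>x. G x * p x \<partial>M)"
  proof (cases "(\<integral>x. G x \<partial>M) = 0")
    case True then show ?thesis using Z1 by simp
  next
    case False
    then have pos: "0 < (\<integral>x. G x \<partial>M)" using IG0 by simp
    show ?thesis
    proof (cases "(\<integral>x. G x * p x \<partial>M) = 0")
      case True then show ?thesis using Z2 by simp
    next
      case False
      define c where "c = (\<integral>x. G x * p x \<partial>M) / (\<integral>x. G x \<partial>M)"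
      have c0: "0 < c" unfolding c_def using False IGp0 pos by simp
      obtain H where H: "\<And>x. G x * (h x - H) * (p x - c) \<le> 0" using key[OF c0] by blast
      have eq: "(\<lambda>x. G x * (h x - H) * (p x - c)) =
          (\<lambda>x. G x * h x * p x - c * (G x * h x) - H * (G x * p x) + (H * c) * G x)"
        by (auto simp: fun_eq_iff algebra_simps)
      have "0 \<le> (\<integral>x. - (G x * (h x - H) * (p x - c)) \<partial>M)"
        using H by (intro integral_nonneg_AE) (auto simp: le_minus_iff)
      then have "(\<integral>x. G x * (h x - H) * (p x - c) \<partial>M) \<le> 0" by simp
      also have "(\<integral>x. G x * (h x - H) * (p x - c) \<partial>M) =
          (\<integral>x. G x * h x * p x \<partial>M) - c * (\<integral>x. G x * h x \<partial>M) - H * (\<integral>x. G x * p x \<partial>M) + (H * c) * (\<integral>x. G x \<partial>M)"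
        unfolding eq using iG iGp iGh iGhp by simp
      also have "(H * c) * (\<integral>x. G x \<partial>M) = H * (\<integral>x. G x * p x \<partial>M)"
        unfolding c_def using pos by simp
      finally have "(\<integral>x. G x * h x * p x \<partial>M) \<le> c * (\<integral>x. G x * h x \<partial>M)" by simp
      then have "(\<integral>x. G x * h x * p x \<partial>M) * (\<integral>x. G x \<partial>M) \<le> c * (\<integral>x. G x * h x \<partial>M) * (\<integral>x. G x \<partial>M)"
        using pos by (intro mult_right_mono) auto
      also have "\<dots> = (\<integral>x. G x * h x \<partial>M) * (\<integral>x. G x * p x \<partial>M)"
        unfolding c_def using pos by simp
      finally show ?thesis .
    qed
  qed
qed




lemma cdf_meas[measurable]: "cdf D \<in> borel_measurable borel"
proof (cases D)
  case (Frechet a)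
  have "cdf D = (\<lambda>x. if x \<le> 0 then 0 else exp (- (x powr (- a))))" using Frechet by (auto simp: fun_eq_iff)
  then show ?thesis by simp
next
  case (Pareto a)
  have "cdf D = (\<lambda>x. if x < 1 then 0 else 1 - x powr (- a))" using Pareto by (auto simp: fun_eq_iff)
  then show ?thesis by simp
qed

lemma dens_meas[measurable]: "dens D \<in> borel_measurable borel"
proof (cases D)
  case (Frechet a)
  have "dens D = (\<lambda>x. if x \<le> 0 then 0 else a * x powr (- (a + 1)) * exp (- (x powr (- a))))" using Frechet by (auto simp: fun_eq_iff)
  then show ?thesis by simp
next
  case (Pareto a)
  have "dens D = (\<lambda>x. if x < 1 then 0 else a * x powr (- (a + 1)))" using Pareto by (auto simp: fun_eq_iff)
  then show ?thesis by simp
qed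

locale dist_ok =
  fixes D :: distr and a :: real
  assumes Da: "D = Frechet a \<or> D = Pareto a" and a1: "a > 1"
begin

lemma pw_le1: "1 \<le> (x::real) \<Longrightarrow> 0 \<le> b \<Longrightarrow> x powr (- b) \<le> 1"
  by (simp add: powr_minus_divide ge_one_powr_ge_zero)

lemma pw_pos: "0 < (x::real) \<Longrightarrow> 0 < x powr b"
  by simp

lemma a0: "a > 0" using a1 by simp

lemma cdf_nonneg: "0 \<le> cdf D x"
  using Da pw_le1[of x a] a0 by auto

lemma cdf_lt1: "cdf D x < 1"
  using Da by auto

lemma cdf_le1: "cdf D x \<le> 1"
  using cdf_lt1[of x] by simp

lemma lep_nonneg: "0 \<le> lep D"
  using Da by auto

lemma cdf_zero: "x \<le> lep D \<Longrightarrow> cdf D x = 0"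
  using Da by (auto simp: not_less)

lemma cdf_mono: assumes "x \<le> y" shows "cdf D x \<le> cdf D y"
  using Da
proof
  assume D: "D = Frechet a"
  show ?thesis
  proof (cases "x \<le> 0")
    case True then show ?thesis using D cdf_nonneg[of y] by simp
  next
    case False
    then have "y powr (- a) \<le> x powr (- a)" using assms a0 by (intro powr_mono2') auto
    then show ?thesis using D False assms by auto
  qed
next
  assume D: "D = Pareto a"
  show ?thesis
  proof (cases "x < 1")
    case True then show ?thesis using D cdf_nonneg[of y] by simp
  next
    case False
    then have "y powr (- a) \<le> x powr (- a)" using assms a0 by (intro powr_mono2') auto
    then show ?thesis using D False assms by auto
  qed
qed

lemma dens_nonneg: "0 \<le> dens D x"
  using Da a0 by auto

lemma dens_zero: "x < lep D \<or> x \<le> 0 \<Longrightarrow> dens D x = 0"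
  using Da by auto

lemma deriv_mono:
  fixes f f' :: "real \<Rightarrow> real"
  assumes "x \<le> y" "\<And>t. x \<le> t \<Longrightarrow> t \<le> y \<Longrightarrow> DERIV f t :> f' t"
    "\<And>t. x \<le> t \<Longrightarrow> t \<le> y \<Longrightarrow> 0 \<le> f' t"
  shows "f x \<le> f y"
proof (rule DERIV_nonneg_imp_increasing_open[OF assms(1)])
  show "continuous_on {x..y} f"
    using assms(2) by (intro DERIV_atLeastAtMost_imp_continuous_on) blast
  fix t assume "x < t" "t < y"
  then show "\<exists>z. DERIV f t :> z \<and> 0 \<le> z" using assms(2,3) by (meson less_imp_le)
qed

lemma frechet_phi_mono:
  assumes "0 \<le> c" "c < x" "x \<le> y"
  shows "x powr (- a) - (x - c) powr (- a) \<le> y powr (- a) - (y - c) powr (- a)"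
proof (rule deriv_mono[where f="\<lambda>t. t powr (- a) - (t - c) powr (- a)" and f'="\<lambda>t. a * ((t - c) powr (- a - 1) - t powr (- a - 1))"])
  fix t assume t: "x \<le> t" "t \<le> y"
  then have tc: "0 < t - c" "0 < t" using assms by auto
  show "DERIV (\<lambda>t. t powr (- a) - (t - c) powr (- a)) t :> a * ((t - c) powr (- a - 1) - t powr (- a - 1))"
    using tc by (auto intro!: derivative_eq_intros simp: algebra_simps)
  have "t powr (- a - 1) \<le> (t - c) powr (- a - 1)"
    using tc assms a0 by (intro powr_mono2') auto
  then show "0 \<le> a * ((t - c) powr (- a - 1) - t powr (- a - 1))" using a0 by simp
qed (use assms in auto)

lemma pareto_rho_mono:
  assumes "0 \<le> c" "c + 1 < x" "x \<le> y"
  shows "(1 - (x - c) powr (- a)) / (1 - x powr (- a)) \<le> (1 - (y - c) powr (- a)) / (1 - y powr (- a))"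
proof (rule deriv_mono[where f="\<lambda>t. (1 - (t - c) powr (- a)) / (1 - t powr (- a))" and
    f'="\<lambda>t. (a * (t - c) powr (- a - 1) * (1 - t powr (- a)) - (1 - (t - c) powr (- a)) * (a * t powr (- a - 1))) / (1 - t powr (- a))^2"])
  fix t assume t: "x \<le> t" "t \<le> y"
  then have tc: "1 < t - c" "1 < t" using assms by auto
  have tp: "t powr (- a) < 1" using tc a0 by (simp add: powr_minus_divide)
  have tcp: "(t - c) powr (- a) < 1" using tc a0 by (simp add: powr_minus_divide)
  show "DERIV (\<lambda>t. (1 - (t - c) powr (- a)) / (1 - t powr (- a))) t :> 
      (a * (t - c) powr (- a - 1) * (1 - t powr (- a)) - (1 - (t - c) powr (- a)) * (a * t powr (- a - 1))) / (1 - t powr (- a))^2"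
    using tc tp by (auto intro!: derivative_eq_intros simp: algebra_simps power2_eq_square)
  have h1: "t powr (- a - 1) \<le> (t - c) powr (- a - 1)"
    using tc assms a0 by (intro powr_mono2') auto
  have h2: "t powr (- a) \<le> (t - c) powr (- a)"
    using tc assms a0 by (intro powr_mono2') auto
  have "(1 - (t - c) powr (- a)) * (a * t powr (- a - 1)) \<le> (1 - t powr (- a)) * (a * (t - c) powr (- a - 1))"
    using h1 h2 tcp a0 by (intro mult_mono) auto
  then show "0 \<le> (a * (t - c) powr (- a - 1) * (1 - t powr (- a)) - (1 - (t - c) powr (- a)) * (a * t powr (- a - 1))) / (1 - t powr (- a))^2"
    by (simp add: algebra_simps)
qed (use assms in auto)

lemma ratio_mono:
  assumes c: "0 \<le> c" and xy: "x \<le> y"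
  shows "cdf D (x - c) / cdf D x \<le> cdf D (y - c) / cdf D y"
proof (cases "cdf D (x - c) = 0")
  case True
  then show ?thesis using cdf_nonneg by simp
next
  case False
  show ?thesis using Da
  proof
    assume D: "D = Frechet a"
    then have xc: "0 < x - c" using False by (cases "x - c \<le> 0") auto
    have "x powr (- a) - (x - c) powr (- a) \<le> y powr (- a) - (y - c) powr (- a)"
      using frechet_phi_mono[of c x y] xc c xy by auto
    then have "exp (x powr (- a) - (x - c) powr (- a)) \<le> exp (y powr (- a) - (y - c) powr (- a))"
      by simp
    moreover have "cdf D (x - c) / cdf D x = exp (x powr (- a) - (x - c) powr (- a))"
      using D xc c by (simp add: exp_diff[symmetric] exp_minus_inverse)
    moreover have "cdf D (y - c) / cdf D y = exp (y powr (- a) - (y - c) powr (- a))"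
      using D xc c xy by (simp add: exp_diff[symmetric] exp_minus_inverse)
    ultimately show ?thesis by simp
  next
    assume D: "D = Pareto a"
    have xc1: "1 \<le> x - c" using D False by (cases "x - c < 1") auto
    have xc: "1 < x - c"
    proof (rule ccontr)
      assume "\<not> 1 < x - c"
      then have "x - c = 1" using xc1 by simp
      then show False using False D by simp
    qed
    have "(1 - (x - c) powr (- a)) / (1 - x powr (- a)) \<le> (1 - (y - c) powr (- a)) / (1 - y powr (- a))"
      using pareto_rho_mono[of c x y] xc c xy by auto
    then show ?thesis using D xc c xy by auto
  qed
qed

lemma frechet_small:
  assumes x: "0 < x" "x \<le> 1"
  shows "a * x powr (- (a + 1)) * exp (- (x powr (- a))) \<le> 27 * a * x"
proof -
  define s where "s = x powr (- a)"
  have s0: "0 < s" unfolding s_def using x by simp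
  have "(1 + s / 3) ^ 3 \<le> exp (s / 3) ^ 3"
    using s0 by (intro power_mono) (auto simp: exp_ge_add_one_self)
  also have "exp (s / 3) ^ 3 = exp s" by (simp add: exp_of_nat_mult[symmetric])
  finally have "(s / 3) ^ 3 \<le> exp s"
    using s0 by (smt (verit) power_mono divide_pos_pos)
  then have "s ^ 3 \<le> 27 * exp s" by (simp add: power_divide)
  then have e: "exp (- s) \<le> 27 / s ^ 3"
    using s0 by (simp add: exp_minus field_simps)
  have s3: "s ^ 3 = x powr (- 3 * a)" unfolding s_def using x
    by (simp add: powr_realpow[symmetric] powr_powr mult.commute)
  have "a * x powr (- (a + 1)) * exp (- s) \<le> a * x powr (- (a + 1)) * (27 / s ^ 3)"
    using e a0 x by (intro mult_left_mono) auto
  also have "\<dots> = 27 * a * (x powr (- (a + 1)) * x powr (3 * a))"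
    unfolding s3 using x by (simp add: powr_minus field_simps)
  also have "x powr (- (a + 1)) * x powr (3 * a) = x powr (2 * a - 1)"
    using x by (simp add: powr_add[symmetric])
  also have "x powr (2 * a - 1) \<le> x powr 1"
    using x a1 by (intro powr_mono') auto
  finally show ?thesis unfolding s_def using x a0 by (simp add: mult_left_mono)
qed

lemma pow_tail_integrable:
  assumes "b > 1"
  shows "integrable lborel (\<lambda>x::real. indicator {1..} x * x powr (- b))"
proof -
  have "(\<lambda>x::real. x powr (- b)) integrable_on {1..}"
    using has_integral_powr_to_inf[of "- b" 1] assms unfolding integrable_on_def by auto
  then have "(\<lambda>x::real. x powr (- b)) absolutely_integrable_on {1..}"
    by (rule nonnegative_absolutely_integrable_1) auto
  then have "integrable lebesgue (\<lambda>x::real. indicator {1..} x *\<^sub>R x powr (- b))"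
    unfolding set_integrable_def .
  then show ?thesis
    by (subst (asm) integrable_completion) auto
qed

lemma dens_bound:
  "\<bar>dens D x\<bar> \<le> 27 * a * indicator {0..1} x + a * (indicator {1..} x * x powr (- (a + 1)))"
  "\<bar>dens D x / x\<bar> \<le> 27 * a * indicator {0..1} x + a * (indicator {1..} x * x powr (- (a + 1)))"
proof -
  have "dens D x \<le> 27 * a * indicator {0..1} x + a * (indicator {1..} x * x powr (- (a + 1)))
      \<and> dens D x / x \<le> 27 * a * indicator {0..1} x + a * (indicator {1..} x * x powr (- (a + 1)))"
  proof (cases "x \<le> 0")
    case True
    then show ?thesis using dens_zero[of x] a0 by (auto simp: indicator_def)
  next
    case False
    note xpos = this
    show ?thesis
    proof (cases "x \<le> 1")
      case True
      have "dens D x \<le> 27 * a * x"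
        using Da
      proof
        assume "D = Frechet a" then show ?thesis using frechet_small[of x] True xpos by simp
      next
        assume "D = Pareto a" then show ?thesis using True xpos a0 by (cases "x < 1") auto
      qed
      moreover have "27 * a * x \<le> 27 * a" using True a0 by simp
      moreover have "0 \<le> a * (indicator {1..} x * x powr (- (a + 1)))" using a0 by (simp add: indicator_def)
      moreover have "dens D x / x \<le> 27 * a"
        using \<open>dens D x \<le> 27 * a * x\<close> xpos by (simp add: divide_le_eq)
      ultimately show ?thesis using True xpos by (simp add: indicator_def)
    next
      case False
      have "dens D x \<le> a * x powr (- (a + 1))"
        using Da
      proof
        assume "D = Frechet a" then show ?thesis using False a0 by (auto simp: mult_left_le)
      next
        assume "D = Pareto a" then show ?thesis using False by simp
      qed
      moreover have "dens D x / x \<le> dens D x"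
        using False dens_nonneg[of x] by (simp add: divide_le_eq mult_le_cancel_left1 mult_le_cancel_left2)
      ultimately show ?thesis using False by (simp add: indicator_def)
    qed
  qed
  moreover have "0 \<le> dens D x" "0 \<le> dens D x / x"
    using dens_nonneg[of x] dens_zero[of x] by (cases "x \<le> 0"; auto)+
  ultimately show "\<bar>dens D x\<bar> \<le> 27 * a * indicator {0..1} x + a * (indicator {1..} x * x powr (- (a + 1)))"
    "\<bar>dens D x / x\<bar> \<le> 27 * a * indicator {0..1} x + a * (indicator {1..} x * x powr (- (a + 1)))"
    by auto
qed

lemma bound_integrable:
  "integrable lborel (\<lambda>x. 27 * a * indicator {0..1::real} x + a * (indicator {1..} x * x powr (- (a + 1))))"
proof -
  have "integrable lborel (indicator {0..1::real} :: real \<Rightarrow> real)"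
    by (intro integrable_real_indicator) auto
  moreover have "integrable lborel (\<lambda>x::real. indicator {1..} x * x powr (- (a + 1)))"
    using a1 by (intro pow_tail_integrable) auto
  ultimately show ?thesis by auto
qed

lemma dens_integrable: "integrable lborel (dens D)" "integrable lborel (\<lambda>x. dens D x / x)"
proof -
  show "integrable lborel (dens D)"
    by (rule Bochner_Integration.integrable_bound[OF bound_integrable])
       (auto intro!: AE_I2 order_trans[OF dens_bound(1)])
  show "integrable lborel (\<lambda>x. dens D x / x)"
    by (rule Bochner_Integration.integrable_bound[OF bound_integrable])
       (use dens_bound(2) in \<open>auto intro!: AE_I2 order_trans[OF _ abs_ge_self]\<close>)
qed

end

lemma Qf_neg: "k < 0 \<Longrightarrow> Qf P b k = 0"
  unfolding Qf_def by (intro sum.neutral) auto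

lemma sum_theta:
  assumes "finite P"
  shows "(\<Sum>\<theta>=1..m. \<Sum>S | S \<subseteq> P \<and> card S = \<theta> - 1. Y S) =
         (\<Sum>S\<in>Pow P. if int (card S) \<le> int m - 1 then Y S else 0)"
proof -
  have "(\<Sum>\<theta>=1..m. \<Sum>S | S \<subseteq> P \<and> card S = \<theta> - 1. Y S) =
        (\<Sum>\<theta>=1..m. \<Sum>S\<in>Pow P. if card S = \<theta> - 1 then Y S else 0)"
  proof (rule sum.cong[OF refl])
    fix \<theta>
    have e: "{S. S \<subseteq> P \<and> card S = \<theta> - 1} = {S \<in> Pow P. card S = \<theta> - 1}" by auto
    show "(\<Sum>S | S \<subseteq> P \<and> card S = \<theta> - 1. Y S) = (\<Sum>S\<in>Pow P. if card S = \<theta> - 1 then Y S else 0)"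
      unfolding e using assms by (intro sum.inter_filter) auto
  qed
  also have "\<dots> = (\<Sum>S\<in>Pow P. \<Sum>\<theta>=1..m. if card S = \<theta> - 1 then Y S else 0)"
    by (rule sum.swap)
  also have "\<dots> = (\<Sum>S\<in>Pow P. if int (card S) \<le> int m - 1 then Y S else 0)"
  proof (rule sum.cong[OF refl])
    fix S
    have "(\<Sum>\<theta>=1..m. if card S = \<theta> - 1 then Y S else 0) = (\<Sum>\<theta>\<in>{1..m}. if \<theta> = card S + 1 then Y S else 0)"
      by (intro sum.cong refl) auto
    also have "\<dots> = (if card S + 1 \<in> {1..m} then Y S else 0)"
      by (simp add: sum.delta')
    finally show "(\<Sum>\<theta>=1..m. if card S = \<theta> - 1 then Y S else 0) = (if int (card S) \<le> int m - 1 then Y S else 0)"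
      by auto
  qed
  finally show ?thesis .
qed

context dist_ok
begin

lemma int_fd:
  fixes f :: "real \<Rightarrow> real"
  assumes [measurable]: "f \<in> borel_measurable borel" and K: "\<And>z. \<bar>f z\<bar> \<le> K"
  shows "integrable lborel (\<lambda>z. f z * dens D (z + L))"
    and "integrable lborel (\<lambda>z. f z * dens D (z + L) / (z + L))"
proof -
  have K0: "0 \<le> K" using K[of 0] by simp
  have i1: "integrable lborel (\<lambda>z. dens D (z + L))"
    using lborel_integrable_real_affine[OF dens_integrable(1), of 1 L] by (simp add: add.commute)
  have i2: "integrable lborel (\<lambda>z. dens D (z + L) / (z + L))"
    using lborel_integrable_real_affine[OF dens_integrable(2), of 1 L] by (simp add: add.commute)
  show "integrable lborel (\<lambda>z. f z * dens D (z + L))"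
    by (rule Bochner_Integration.integrable_bound[of _ "\<lambda>z. K * dens D (z + L)"])
       (use i1 K K0 dens_nonneg in \<open>auto intro!: AE_I2 mult_right_mono simp: abs_mult\<close>)
  have i3: "integrable lborel (\<lambda>z. K * (dens D (z + L) / (z + L)))"
    using i2 by (rule integrable_mult_right)
  have "integrable lborel (\<lambda>z. f z * (dens D (z + L) / (z + L)))"
  proof (rule Bochner_Integration.integrable_bound[OF i3])
    show "(\<lambda>z. f z * (dens D (z + L) / (z + L))) \<in> borel_measurable lborel" by measurable
    show "AE x in lborel. norm (f x * (dens D (x + L) / (x + L))) \<le> norm (K * (dens D (x + L) / (x + L)))"
    proof (rule AE_I2)
      fix x
      have "\<bar>f x\<bar> * \<bar>dens D (x + L) / (x + L)\<bar> \<le> \<bar>K\<bar> * \<bar>dens D (x + L) / (x + L)\<bar>"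
        using K[of x] K0 by (intro mult_right_mono) auto
      then show "norm (f x * (dens D (x + L) / (x + L))) \<le> norm (K * (dens D (x + L) / (x + L)))"
        by (simp only: real_norm_def abs_mult)
    qed
  qed
  then show "integrable lborel (\<lambda>z. f z * dens D (z + L) / (z + L))" by simp
qed

lemma rank_split:
  "rank_integrand D lam B i \<theta> z =
     (\<Sum>S | S \<subseteq> B - {i} \<and> card S = \<theta> - 1.
        (\<Prod>j\<in>S. 1 - cdf D (z + lam j)) * (\<Prod>j\<in>B - (S \<union> {i}). cdf D (z + lam j))) * dens D (z + lam i)"
  unfolding rank_integrand_def ..

lemma rank_integrable:
  "integrable lborel (rank_integrand D lam B i \<theta>)"
  "integrable lborel (\<lambda>z. rank_integrand D lam B i \<theta> z / (z + lam i))"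
proof -
  define RS where "RS = (\<lambda>z. (\<Sum>S | S \<subseteq> B - {i} \<and> card S = \<theta> - 1.
        (\<Prod>j\<in>S. 1 - cdf D (z + lam j)) * (\<Prod>j\<in>B - (S \<union> {i}). cdf D (z + lam j))))"
  have [measurable]: "RS \<in> borel_measurable borel" unfolding RS_def by measurable
  have "\<bar>RS z\<bar> \<le> real (card {S. S \<subseteq> B - {i} \<and> card S = \<theta> - 1}) * 1" for z
  proof -
    have "0 \<le> RS z" unfolding RS_def
      using cdf_nonneg cdf_le1 by (intro sum_nonneg mult_nonneg_nonneg prod_nonneg) auto
    moreover have "RS z \<le> real (card {S. S \<subseteq> B - {i} \<and> card S = \<theta> - 1}) * 1" unfolding RS_def
      by (rule sum_bounded_above)
         (use cdf_nonneg cdf_le1 in \<open>auto intro!: mult_le_one prod_le_1 prod_nonneg\<close>)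
    ultimately show ?thesis by simp
  qed
  note I = int_fd[of RS, OF _ this]
  show "integrable lborel (rank_integrand D lam B i \<theta>)"
    using I(1) unfolding rank_integrand_def RS_def by simp
  show "integrable lborel (\<lambda>z. rank_integrand D lam B i \<theta> z / (z + lam i))"
    using I(2) unfolding rank_integrand_def RS_def by simp
qed

lemma rank_zero: "z < lep D - lam i \<Longrightarrow> rank_integrand D lam B i \<theta> z = 0"
  unfolding rank_integrand_def using dens_zero[of "z + lam i"] by simp

lemma phi_full: "phi_theta i \<theta> lam D B = (\<integral>z. rank_integrand D lam B i \<theta> z \<partial>lborel)"
  unfolding phi_theta_def set_lebesgue_integral_def
  by (intro Bochner_Integration.integral_cong refl) (auto simp: indicator_def rank_zero)

lemma J_full: "J_theta i \<theta> lam D B = (\<integral>z. rank_integrand D lam B i \<theta> z / (z + lam i) \<partial>lborel)"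
  unfolding J_theta_def set_lebesgue_integral_def
  by (intro Bochner_Integration.integral_cong refl) (auto simp: indicator_def rank_zero)

end

context dist_ok
begin

lemma rank_star:
  assumes "1 \<le> M" "M \<le> i"
  shows "rank_integrand D (\<lambda>k. if k \<le> i then lam i else lam k) {1..i} i M z =
     real ((i - 1) choose (M - 1)) * ((1 - cdf D (z + lam i)) ^ (M - 1) * cdf D (z + lam i) ^ (i - M) * dens D (z + lam i))"
proof -
  define ls where "ls = (\<lambda>k. if k \<le> i then lam i else lam k)"
  define Q where "Q = {1..i} - {i}"
  have finQ: "finite Q" unfolding Q_def by simp
  have cQ: "card Q = i - 1" unfolding Q_def using assms by simp
  have each: "(\<Prod>j\<in>S. 1 - cdf D (z + ls j)) * (\<Prod>j\<in>{1..i} - (S \<union> {i}). cdf D (z + ls j)) =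
      (1 - cdf D (z + lam i)) ^ (M - 1) * cdf D (z + lam i) ^ (i - M)"
    if S: "S \<in> {S. S \<subseteq> Q \<and> card S = M - 1}" for S
  proof -
    have SQ: "S \<subseteq> Q" "card S = M - 1" using S by auto
    have e1: "(\<Prod>j\<in>S. 1 - cdf D (z + ls j)) = (\<Prod>j\<in>S. 1 - cdf D (z + lam i))"
      using SQ unfolding Q_def ls_def by (intro prod.cong refl) auto
    have e2: "{1..i} - (S \<union> {i}) = Q - S" unfolding Q_def by auto
    have e3: "(\<Prod>j\<in>Q - S. cdf D (z + ls j)) = (\<Prod>j\<in>Q - S. cdf D (z + lam i))"
      unfolding Q_def ls_def by (intro prod.cong refl) auto
    have c2: "card (Q - S) = i - M"
      using SQ finQ cQ assms by (simp add: card_Diff_subset finite_subset)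
    show ?thesis unfolding e1 e2 e3 using SQ c2 by simp
  qed
  have s: "(\<Sum>S | S \<subseteq> Q \<and> card S = M - 1. (\<Prod>j\<in>S. 1 - cdf D (z + ls j)) * (\<Prod>j\<in>{1..i} - (S \<union> {i}). cdf D (z + ls j))) =
     (\<Sum>S | S \<subseteq> Q \<and> card S = M - 1. (1 - cdf D (z + lam i)) ^ (M - 1) * cdf D (z + lam i) ^ (i - M))"
    by (rule sum.cong[OF refl]) (rule each)
  have "rank_integrand D ls {1..i} i M z =
      (\<Sum>S\<in>{S. S \<subseteq> Q \<and> card S = M - 1}. (1 - cdf D (z + lam i)) ^ (M - 1) * cdf D (z + lam i) ^ (i - M)) * dens D (z + lam i)"
    unfolding rank_integrand_def Q_def[symmetric] s by (simp add: ls_def)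
  also have "\<dots> = real ((i - 1) choose (M - 1)) * ((1 - cdf D (z + lam i)) ^ (M - 1) * cdf D (z + lam i) ^ (i - M) * dens D (z + lam i))"
    using n_subsets[OF finQ, of "M - 1"] cQ by simp
  finally show ?thesis unfolding ls_def .
qed

end

lemma frac_aux:
  fixes J Pp g0 g1 :: real
  assumes "0 \<le> J" "0 \<le> Pp" "0 \<le> g0" "0 \<le> g1" "J * g0 \<le> Pp * g1" "g0 = 0 \<Longrightarrow> J = 0"
  shows "J / Pp \<le> g1 / g0"
proof (cases "g0 = 0")
  case True then show ?thesis using assms by simp
next
  case False
  show ?thesis
  proof (cases "Pp = 0")
    case True then show ?thesis using assms by simp
  next
    case False
    then have "0 < Pp" "0 < g0" using assms \<open>g0 \<noteq> 0\<close> by auto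
    then show ?thesis using assms(5) by (simp add: field_simps mult.commute)
  qed
qed

theorem lemma2:
  fixes d m i :: nat and \<alpha> :: real and D :: distr and lam :: "nat \<Rightarrow> real"
  assumes "1 \<le> m" and "m \<le> d"
    and "\<alpha> > 1"
    and "D \<in> {Frechet \<alpha>, Pareto \<alpha>}"
    and "\<forall>k\<in>{1..d}. 0 \<le> lam k"
    and "\<forall>j k. 1 \<le> j \<and> j \<le> k \<and> k \<le> d \<longrightarrow> lam j \<le> lam k"
    and "i \<in> {1..d}"
  shows "J_sum i lam D m {1..d} / phi_sum i lam D m {1..d}
    \<le> Max ((\<lambda>(w, \<theta>).
          J_theta i \<theta> (\<lambda>k. if k \<le> i then lam i else lam k) D ({1..i} - {1..w}) /
          phi_theta i \<theta> (\<lambda>k. if k \<le> i then lam i else lam k) D ({1..i} - {1..w}))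
        ` {(w, \<theta>). w \<in> {0..min m i - 1} \<and> \<theta> \<in> {1..min m i - w}})"
proof -
  interpret dist_ok D \<alpha> using assms(3,4) by unfold_locales auto
  define L where "L = lam i"
  define M where "M = min m i"
  define A where "A = {1..<i}"
  define Cs where "Cs = {i<..d}"
  define P where "P = {1..d} - {i}"
  define u where "u = (\<lambda>z. cdf D (z + L))"
  define fd where "fd = (\<lambda>z. dens D (z + L))"
  define q where "q = (\<lambda>z j. 1 - cdf D (z + lam j))"
  define bb where "bb = (\<lambda>z j. if j \<in> A then 1 - cdf D (z + lam j) / cdf D (z + L) else 1 - cdf D (z + lam j))"
  define HT where "HT = (\<lambda>T z. Qf ((A - T) \<union> Cs) (bb z) (int m - 1 - int (card T)))"
  define cT where "cT = (\<lambda>T z. (1 - u z) ^ card T * u z ^ (card A - card T) * HT T z)"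
  define G where "G = (\<lambda>z. (1 - u z) ^ (M - 1) * u z ^ (i - M) * fd z)"
  define hT where "hT = (\<lambda>T z. (u z / (1 - u z)) ^ (M - 1 - card T) * HT T z)"
  define ps where "ps = (\<lambda>z. 1 / (z + L))"
  have i1: "1 \<le> i" "i \<le> d" using assms(7) by auto
  have M1: "1 \<le> M" "M \<le> i" "M \<le> m" unfolding M_def using i1 assms(1) by auto
  have PAC: "P = A \<union> Cs" "A \<inter> Cs = {}" "finite A" "finite Cs" "card A = i - 1"
    unfolding P_def A_def Cs_def using i1 by auto
  have lamA: "lam j \<le> L" if "j \<in> A" for j
    using that assms(6) i1 unfolding A_def L_def by auto
  have u0: "0 \<le> u z" and u1: "u z < 1" for z unfolding u_def using cdf_nonneg cdf_lt1 by auto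
  have umono: "u z1 \<le> u z2" if "z1 \<le> z2" for z1 z2 unfolding u_def using that by (intro cdf_mono) simp
  have cdfA: "cdf D (z + lam j) \<le> u z" if "j \<in> A" for j z
    unfolding u_def using lamA[OF that] by (intro cdf_mono) simp
  have bb_range: "0 \<le> bb z j \<and> bb z j \<le> 1" for z j
  proof (cases "j \<in> A")
    case True
    have "cdf D (z + lam j) / cdf D (z + L) \<le> 1"
      using cdfA[OF True, of z] cdf_nonneg[of "z + lam j"] unfolding u_def
      by (cases "cdf D (z + L) = 0") (auto simp: divide_le_eq_1)
    moreover have "0 \<le> cdf D (z + lam j) / cdf D (z + L)" using cdf_nonneg by simp
    ultimately show ?thesis using True unfolding bb_def by simp
  next
    case False
    then show ?thesis unfolding bb_def using cdf_nonneg cdf_le1 by simp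
  qed
  have bb_anti: "bb z2 j \<le> bb z1 j" if "z1 \<le> z2" for z1 z2 j
  proof (cases "j \<in> A")
    case True
    have "cdf D (z1 + L - (L - lam j)) / cdf D (z1 + L) \<le> cdf D (z2 + L - (L - lam j)) / cdf D (z2 + L)"
      using lamA[OF True] that by (intro ratio_mono) auto
    then show ?thesis using True unfolding bb_def by simp
  next
    case False
    then show ?thesis unfolding bb_def using that by (simp add: cdf_mono)
  qed
  have Wz: "(\<Sum>\<theta>=1..m. rank_integrand D lam {1..d} i \<theta> z) = (\<Sum>T\<in>Pow A. cT T z) * fd z" for z
  proof -
    have "(\<Sum>\<theta>=1..m. rank_integrand D lam {1..d} i \<theta> z) =
       (\<Sum>\<theta>=1..m. \<Sum>S | S \<subseteq> P \<and> card S = \<theta> - 1.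
        (\<Prod>j\<in>S. 1 - cdf D (z + lam j)) * (\<Prod>j\<in>{1..d} - (S \<union> {i}). cdf D (z + lam j))) * fd z"
      unfolding rank_split fd_def L_def P_def sum_distrib_right ..
    also have "(\<Sum>\<theta>=1..m. \<Sum>S | S \<subseteq> P \<and> card S = \<theta> - 1.
        (\<Prod>j\<in>S. 1 - cdf D (z + lam j)) * (\<Prod>j\<in>{1..d} - (S \<union> {i}). cdf D (z + lam j))) =
        (\<Sum>S\<in>Pow P. if int (card S) \<le> int m - 1 then
        (\<Prod>j\<in>S. 1 - cdf D (z + lam j)) * (\<Prod>j\<in>{1..d} - (S \<union> {i}). cdf D (z + lam j)) else 0)"
      by (rule sum_theta) (simp add: P_def)
    also have "\<dots> = Qf P (q z) (int m - 1)"
      unfolding Qf_def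
    proof (rule sum.cong[OF refl])
      fix S assume "S \<in> Pow P"
      then have e: "{1..d} - (S \<union> {i}) = P - S" unfolding P_def by auto
      show "(if int (card S) \<le> int m - 1 then
        (\<Prod>j\<in>S. 1 - cdf D (z + lam j)) * (\<Prod>j\<in>{1..d} - (S \<union> {i}). cdf D (z + lam j)) else 0) =
        (if int (card S) \<le> int m - 1 then (\<Prod>j\<in>S. q z j) * (\<Prod>j\<in>P - S. 1 - q z j) else 0)"
        unfolding e q_def by simp
    qed
    also have "\<dots> = (\<Sum>T\<in>Pow A. cT T z)"
      unfolding PAC(1) cT_def HT_def
    proof (rule Qf_decomp[OF PAC(3,4,2)])
      show "\<forall>j\<in>Cs. bb z j = q z j" using PAC(2) unfolding bb_def q_def by auto
      show "\<forall>j\<in>A. q z j = 1 - u z + u z * bb z j"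
      proof
        fix j assume j: "j \<in> A"
        show "q z j = 1 - u z + u z * bb z j"
        proof (cases "u z = 0")
          case True
          then have "cdf D (z + lam j) = 0" using cdfA[OF j, of z] cdf_nonneg[of "z + lam j"] by simp
          then show ?thesis using True unfolding q_def by simp
        next
          case False
          then show ?thesis using j unfolding q_def bb_def u_def by (simp add: field_simps)
        qed
      qed
    qed
    finally show ?thesis .
  qed
  have GH: "cT T z * fd z = G z * hT T z" if T: "T \<in> Pow A" for T z
  proof (cases "card T \<le> M - 1")
    case True
    obtain n where n: "M - 1 = card T + n" using True le_Suc_ex by blast
    have "card A - card T = (i - M) + n" using n PAC(5) M1 by simp
    moreover have "1 - u z \<noteq> 0" using u1[of z] by simp
    ultimately show ?thesis unfolding cT_def G_def hT_def n
      by (simp add: power_add power_divide field_simps)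
  next
    case False
    then have "int m - 1 - int (card T) < 0"
    proof -
      have "card T \<le> card A" using T PAC(3) by (auto intro: card_mono)
      then have "card T \<le> i - 1" using PAC(5) by simp
      then have "M = m" using False M1 unfolding M_def by auto
      then show ?thesis using False M1 by simp
    qed
    then have "HT T z = 0" unfolding HT_def by (rule Qf_neg)
    then show ?thesis unfolding cT_def hT_def by simp
  qed
  have HT_nonneg: "0 \<le> HT T z" for T z unfolding HT_def by (rule Qf_nonneg) (use bb_range in auto)
  have HT_mono: "HT T z1 \<le> HT T z2" if "z1 \<le> z2" for T z1 z2
    unfolding HT_def by (rule Qf_anti) (use PAC bb_range bb_anti[OF that] in auto)
  have hT_nonneg: "0 \<le> hT T z" for T z unfolding hT_def using u0[of z] u1[of z] HT_nonneg
    by (intro mult_nonneg_nonneg zero_le_power) auto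
  have hT_mono: "hT T z1 \<le> hT T z2" if "z1 \<le> z2" for T z1 z2
  proof -
    have "u z1 / (1 - u z1) \<le> u z2 / (1 - u z1)"
      using umono[OF that] u1[of z1] by (intro divide_right_mono) auto
    also have "\<dots> \<le> u z2 / (1 - u z2)"
      using umono[OF that] u1[of z2] u0[of z2] by (intro divide_left_mono) auto
    finally have "(u z1 / (1 - u z1)) ^ (M - 1 - card T) \<le> (u z2 / (1 - u z2)) ^ (M - 1 - card T)"
      using u0[of z1] u1[of z1] by (intro power_mono) auto
    then show ?thesis unfolding hT_def using HT_mono[OF that] HT_nonneg u0 u1
      by (intro mult_mono) (auto intro!: zero_le_power divide_nonneg_nonneg simp: less_imp_le)
  qed
  have G_nonneg: "0 \<le> G z" for z unfolding G_def fd_def using u0[of z] u1[of z] dens_nonneg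
    by (intro mult_nonneg_nonneg zero_le_power) auto
  have G_zero: "G z = 0" if "z + L \<le> 0" for z unfolding G_def fd_def using dens_zero[of "z + L"] that by simp
  have Gp_nonneg: "0 \<le> G z * ps z" for z
    using G_nonneg[of z] G_zero[of z] unfolding ps_def by (cases "z + L \<le> 0") auto
  have key: "\<exists>H. \<forall>z. G z * (hT T z - H) * (ps z - c) \<le> 0" if c: "0 < c" for T c
  proof (intro exI allI)
    fix z
    show "G z * (hT T z - hT T (1 / c - L)) * (ps z - c) \<le> 0"
    proof (cases "z + L \<le> 0")
      case True then show ?thesis using G_zero by simp
    next
      case False
      show ?thesis
      proof (cases "z < 1 / c - L")
        case True
        then have "hT T z - hT T (1 / c - L) \<le> 0" using hT_mono[of z "1 / c - L" T] by simp
        moreover have "0 \<le> ps z - c"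
        proof -
          have "z + L < 1 / c" using True by simp
          then have "c < 1 / (z + L)" using False c by (simp add: field_simps)
          then show ?thesis unfolding ps_def by simp
        qed
        ultimately have "(hT T z - hT T (1 / c - L)) * (ps z - c) \<le> 0" by (rule mult_nonpos_nonneg)
        then show ?thesis using G_nonneg[of z] by (simp add: mult_nonneg_nonpos mult.assoc)
      next
        case False2: False
        then have "0 \<le> hT T z - hT T (1 / c - L)" using hT_mono[of "1 / c - L" z T] by simp
        moreover have "ps z - c \<le> 0"
        proof -
          have "1 / c \<le> z + L" using False2 by simp
          then have "1 / (z + L) \<le> c" using False c by (simp add: field_simps)
          then show ?thesis unfolding ps_def by simp
        qed
        ultimately have "(hT T z - hT T (1 / c - L)) * (ps z - c) \<le> 0" by (rule mult_nonneg_nonpos)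
        then show ?thesis using G_nonneg[of z] by (simp add: mult_nonneg_nonpos mult.assoc)
      qed
    qed
  qed
  have cT_meas[measurable]: "cT T \<in> borel_measurable borel" for T
    unfolding cT_def HT_def Qf_def bb_def u_def by measurable
  have cT_bound: "\<bar>cT T z\<bar> \<le> 2 ^ card ((A - T) \<union> Cs)" for T z
  proof -
    have a1: "(1 - u z) ^ card T \<le> 1" "u z ^ (card A - card T) \<le> 1"
      using u0[of z] u1[of z] by (auto intro!: power_le_one)
    have "HT T z \<le> 2 ^ card ((A - T) \<union> Cs)" unfolding HT_def by (rule Qf_le) (use bb_range in auto)
    moreover have "0 \<le> (1 - u z) ^ card T * u z ^ (card A - card T)" using u0[of z] u1[of z] by auto
    moreover have "(1 - u z) ^ card T * u z ^ (card A - card T) \<le> 1" using a1 u0[of z] u1[of z]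
      by (intro mult_le_one) auto
    ultimately have "cT T z \<le> 1 * 2 ^ card ((A - T) \<union> Cs)" unfolding cT_def using HT_nonneg[of T z]
      by (intro mult_mono) auto
    moreover have "0 \<le> cT T z" unfolding cT_def using u0[of z] u1[of z] HT_nonneg[of T z] by auto
    ultimately show ?thesis by simp
  qed
  note cTi = int_fd[OF cT_meas cT_bound, of _ L]
  define gf where "gf = (\<lambda>z. (1 - u z) ^ (M - 1) * u z ^ (i - M))"
  have gf_meas[measurable]: "gf \<in> borel_measurable borel" unfolding gf_def u_def by measurable
  have gf_bound: "\<bar>gf z\<bar> \<le> 1" for z
    unfolding gf_def using u0[of z] u1[of z] by (auto intro!: mult_le_one power_le_one simp: abs_mult)
  note gfi = int_fd[OF gf_meas gf_bound, of L]
  have G_eq: "G = (\<lambda>z. gf z * dens D (z + L))" unfolding G_def gf_def fd_def by auto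
  have iG: "integrable lborel G" using gfi(1) unfolding G_eq .
  have iGp: "integrable lborel (\<lambda>z. G z * ps z)" using gfi(2) unfolding G_eq ps_def by simp
  have iGh: "integrable lborel (\<lambda>z. G z * hT T z)" if "T \<in> Pow A" for T
  proof -
    have "(\<lambda>z. G z * hT T z) = (\<lambda>z. cT T z * dens D (z + L))" using GH[OF that] unfolding fd_def by auto
    then show ?thesis using cTi(1)[of T] by simp
  qed
  have iGhp: "integrable lborel (\<lambda>z. G z * hT T z * ps z)" if "T \<in> Pow A" for T
  proof -
    have "(\<lambda>z. G z * hT T z * ps z) = (\<lambda>z. cT T z * dens D (z + L) / (z + L))" using GH[OF that] unfolding fd_def ps_def by auto
    then show ?thesis using cTi(2)[of T] by simp
  qed
  have cheb: "(\<integral>z. G z * hT T z * ps z \<partial>lborel) * (\<integral>z. G z \<partial>lborel) \<le> (\<integral>z. G z * hT T z \<partial>lborel) * (\<integral>z. G z * ps z \<partial>lborel)"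
     "(\<integral>z. G z \<partial>lborel) = 0 \<Longrightarrow> (\<integral>z. G z * hT T z * ps z \<partial>lborel) = 0" if "T \<in> Pow A" for T
    using chebyshev_aux[OF iG iGp iGh[OF that] iGhp[OF that] G_nonneg Gp_nonneg key] by auto
  have finA: "finite (Pow A)" using PAC(3) by simp
  have phiL: "phi_sum i lam D m {1..d} = (\<Sum>T\<in>Pow A. \<integral>z. G z * hT T z \<partial>lborel)"
  proof -
    have "phi_sum i lam D m {1..d} = (\<Sum>\<theta>=1..m. \<integral>z. rank_integrand D lam {1..d} i \<theta> z \<partial>lborel)"
      unfolding phi_sum_def phi_full ..
    also have "\<dots> = (\<integral>z. (\<Sum>\<theta>=1..m. rank_integrand D lam {1..d} i \<theta> z) \<partial>lborel)"
      using Bochner_Integration.integral_sum[where I="{1..m}" and M=lborel and f="\<lambda>\<theta> z. rank_integrand D lam {1..d} i \<theta> z"] rank_integrable by simp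
    also have "\<dots> = (\<integral>z. (\<Sum>T\<in>Pow A. G z * hT T z) \<partial>lborel)"
      unfolding Wz sum_distrib_right by (intro Bochner_Integration.integral_cong refl sum.cong) (auto simp: GH)
    also have "\<dots> = (\<Sum>T\<in>Pow A. \<integral>z. G z * hT T z \<partial>lborel)"
      by (rule Bochner_Integration.integral_sum) (rule iGh)
    finally show ?thesis .
  qed
  have JL: "J_sum i lam D m {1..d} = (\<Sum>T\<in>Pow A. \<integral>z. G z * hT T z * ps z \<partial>lborel)"
  proof -
    have "J_sum i lam D m {1..d} = (\<Sum>\<theta>=1..m. \<integral>z. rank_integrand D lam {1..d} i \<theta> z / (z + lam i) \<partial>lborel)"
      unfolding J_sum_def J_full ..
    also have "\<dots> = (\<integral>z. (\<Sum>\<theta>=1..m. rank_integrand D lam {1..d} i \<theta> z / (z + lam i)) \<partial>lborel)"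
      by (rule Bochner_Integration.integral_sum[symmetric]) (rule rank_integrable)
    also have "\<dots> = (\<integral>z. (\<Sum>T\<in>Pow A. G z * hT T z * ps z) \<partial>lborel)"
      unfolding sum_divide_distrib[symmetric] Wz sum_distrib_right L_def[symmetric] ps_def
      by (intro Bochner_Integration.integral_cong refl) (auto simp: GH sum_divide_distrib intro!: sum.cong)
    also have "\<dots> = (\<Sum>T\<in>Pow A. \<integral>z. G z * hT T z * ps z \<partial>lborel)"
      by (rule Bochner_Integration.integral_sum) (rule iGhp)
    finally show ?thesis .
  qed
  define ls where "ls = (\<lambda>k. if k \<le> i then lam i else lam k)"
  define C0 where "C0 = real ((i - 1) choose (M - 1))"
  have C0: "0 < C0" unfolding C0_def using M1 by simp
  have rs: "rank_integrand D ls {1..i} i M z = C0 * G z" for z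
    unfolding ls_def C0_def rank_star[OF M1(1,2)] G_def u_def fd_def L_def ..
  have phiR: "phi_theta i M ls D {1..i} = C0 * (\<integral>z. G z \<partial>lborel)"
    unfolding phi_full rs by simp
  have JR: "J_theta i M ls D {1..i} = C0 * (\<integral>z. G z * ps z \<partial>lborel)"
  proof -
    have "J_theta i M ls D {1..i} = (\<integral>z. C0 * (G z * ps z) \<partial>lborel)"
      unfolding J_full rs by (intro Bochner_Integration.integral_cong refl) (simp add: ls_def ps_def L_def)
    then show ?thesis by simp
  qed
  have nn1: "0 \<le> (\<integral>z. G z * hT T z * ps z \<partial>lborel)" for T
    using Gp_nonneg hT_nonneg by (intro integral_nonneg_AE AE_I2) (metis mult.commute mult.left_commute mult_nonneg_nonneg)
  have nn2: "0 \<le> (\<integral>z. G z * hT T z \<partial>lborel)" for T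
    using G_nonneg hT_nonneg by (intro integral_nonneg_AE AE_I2) simp
  have nn3: "0 \<le> (\<integral>z. G z \<partial>lborel)" "0 \<le> (\<integral>z. G z * ps z \<partial>lborel)"
    using G_nonneg Gp_nonneg by (auto intro!: integral_nonneg_AE AE_I2)
  have main: "J_sum i lam D m {1..d} / phi_sum i lam D m {1..d} \<le> J_theta i M ls D {1..i} / phi_theta i M ls D {1..i}"
  proof -
    have "J_sum i lam D m {1..d} / phi_sum i lam D m {1..d} \<le> (\<integral>z. G z * ps z \<partial>lborel) / (\<integral>z. G z \<partial>lborel)"
      unfolding phiL JL
    proof (rule frac_aux)
      show "0 \<le> (\<Sum>T\<in>Pow A. \<integral>z. G z * hT T z * ps z \<partial>lborel)" using nn1 by (simp add: sum_nonneg)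
      show "0 \<le> (\<Sum>T\<in>Pow A. \<integral>z. G z * hT T z \<partial>lborel)" using nn2 by (simp add: sum_nonneg)
      show "(\<Sum>T\<in>Pow A. \<integral>z. G z * hT T z * ps z \<partial>lborel) * (\<integral>z. G z \<partial>lborel)
          \<le> (\<Sum>T\<in>Pow A. \<integral>z. G z * hT T z \<partial>lborel) * (\<integral>z. G z * ps z \<partial>lborel)"
        unfolding sum_distrib_right by (intro sum_mono) (rule cheb(1))
      show "(\<Sum>T\<in>Pow A. \<integral>z. G z * hT T z * ps z \<partial>lborel) = 0" if "(\<integral>z. G z \<partial>lborel) = 0"
        using cheb(2) that by simp
    qed (use nn3 in auto)
    also have "\<dots> = J_theta i M ls D {1..i} / phi_theta i M ls D {1..i}"
      unfolding phiR JR using C0 by simp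
    finally show ?thesis .
  qed
  define Sset where "Sset = {(w, \<theta>). w \<in> {0..min m i - 1} \<and> \<theta> \<in> {1..min m i - w}}"
  define f where "f = (\<lambda>(w, \<theta>).
          J_theta i \<theta> (\<lambda>k. if k \<le> i then lam i else lam k) D ({1..i} - {1..w}) /
          phi_theta i \<theta> (\<lambda>k. if k \<le> i then lam i else lam k) D ({1..i} - {1..w}))"
  have finS: "finite Sset"
    by (rule finite_subset[of _ "{0..min m i} \<times> {0..min m i}"]) (auto simp: Sset_def)
  have mem: "J_theta i M ls D {1..i} / phi_theta i M ls D {1..i} \<in> f ` Sset"
    by (rule image_eqI[where x="(0, M)"]) (use assms(1) i1 in \<open>auto simp: f_def Sset_def ls_def M_def\<close>)
  have "J_theta i M ls D {1..i} / phi_theta i M ls D {1..i} \<le> Max (f ` Sset)"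
    using finS mem by (intro Max_ge) auto
  then show ?thesis using main unfolding f_def Sset_def by simp
qed

end
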